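(* Let $M=(\mathcal{S},\mathcal{A},H,P,r,\mu)$ be a finite-horizon MDP with $\mathcal{S}\times\mathcal{A}$ compact, let $\boldsymbol\phi:\mathcal{S}\times\mathcal{A}\to\mathbb{R}^d$ be a feature map, and fix $h\in[H]$. The following two statements are equivalent. (1) There exist $d$ finite signed Borel measures $\boldsymbol\mu_h=(\mu_h^1,\dots,\mu_h^d)$ on $\mathcal{S}$ and a vector $\boldsymbol\theta_h\in\mathbb{R}^d$ such that for all $(s,a)\in\mathcal{S}\times\mathcal{A}$, $P(\cdot\mid h,s,a)=\boldsymbol\phi(s,a)^{\mathsf T}\boldsymbol\mu_h(\cdot)$ (equality of measures) and $r(h,s,a)=\boldsymbol\phi(s,a)^{\mathsf T}\boldsymbol\theta_h$. (2) There is a constant $C>0$ such that for every $f\in C(\mathcal{S})$ there exists $\boldsymbol\omega_{f,h}\in\mathbb{R}^d$ with $$(\mathcal{T}_hf)(s,a):=r(h,s,a)+\mathbb{E}_{s'\sim P(\cdot\mid h,s,a)}[f(s')]=\boldsymbol\phi(s,a)^{\mathsf T}\boldsymbol\omega_{f,h}\quad\text{for all }(s,a)\in\mathcal{S}\times\mathcal{A},$$ and $\|\boldsymbol\omega_{f,h}\|\le C(\|f\|_{C(\mathcal{S})}+1)$, where $\|\cdot\|$ is the Euclidean norm on $\mathbb{R}^d$.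
   Context: A finite-horizon MDP $M=(\mathcal{S},\mathcal{A},H,P,r,\mu)$ consists of a state space $\mathcal{S}$ and action space $\mathcal{A}$ (subsets of Euclidean spaces), a horizon $H$, Borel transition probabilities $P(\cdot\mid h,s,a)$ on $\mathcal{S}$ for $(h,s,a)\in[H]\times\mathcal{S}\times\mathcal{A}$, a deterministic continuous reward $r:[H]\times\mathcal{S}\times\mathcal{A}\to[0,1]$, and an initial distribution $\mu$. $C(\mathcal{S})$ denotes the bounded continuous real functions on $\mathcal{S}$ with the sup norm $\|\cdot\|_{C(\mathcal{S})}$. *)

theory Defs
  imports "HOL-Probability.Probability"
begin

text \<open>Each P h s a is a Borel probability measure on S (Borel sets of S = sets of
  restrict_space borel S); r is continuous on S x A with values in [0,1] for each h;
  mu is a Borel probability measure on S.\<close>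
definition finite_horizon_mdp ::
  "'a::euclidean_space set \<Rightarrow> 'b::euclidean_space set \<Rightarrow> nat \<Rightarrow>
   (nat \<Rightarrow> 'a \<Rightarrow> 'b \<Rightarrow> 'a measure) \<Rightarrow> (nat \<Rightarrow> 'a \<Rightarrow> 'b \<Rightarrow> real) \<Rightarrow> 'a measure \<Rightarrow> bool"
where
  "finite_horizon_mdp S A H P r mu \<longleftrightarrow>
     (\<forall>h\<in>{1..H}. \<forall>s\<in>S. \<forall>a\<in>A.
        prob_space (P h s a) \<and> sets (P h s a) = sets (restrict_space borel S)) \<and>
     (\<forall>h\<in>{1..H}. continuous_on (S \<times> A) (\<lambda>(s, a). r h s a) \<and>
        (\<forall>s\<in>S. \<forall>a\<in>A. 0 \<le> r h s a \<and> r h s a \<le> 1)) \<and>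
     prob_space mu \<and> sets mu = sets (restrict_space borel S)"

text \<open>A finite signed measure on the sigma-algebra of M: a real-valued, countably
  additive set function (values outside sets M are irrelevant).\<close>
definition finite_signed_measure :: "'a measure \<Rightarrow> ('a set \<Rightarrow> real) \<Rightarrow> bool" where
  "finite_signed_measure M \<nu> \<longleftrightarrow> \<nu> {} = 0 \<and>
     (\<forall>F::nat \<Rightarrow> 'a set. range F \<subseteq> sets M \<longrightarrow> disjoint_family F \<longrightarrow>
        (\<lambda>n. \<nu> (F n)) sums \<nu> (\<Union>n. F n))"

text \<open>C(S): bounded continuous real functions on S, with the sup norm.\<close>
definition bcontinuous :: "'a::topological_space set \<Rightarrow> ('a \<Rightarrow> real) \<Rightarrow> bool" where
  "bcontinuous S f \<longleftrightarrow> continuous_on S f \<and> bounded (f ` S)"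

definition sup_norm :: "'a set \<Rightarrow> ('a \<Rightarrow> real) \<Rightarrow> real" where
  "sup_norm S f = (SUP s\<in>S. \<bar>f s\<bar>)"

end

theory Submission
  imports Defs
begin


lemma space_rb: "sets M = sets (restrict_space borel S) \<Longrightarrow> space M = S"
  by (drule sets_eq_imp_space_eq) (simp add: space_restrict_space)

lemma bint:
  assumes "prob_space M" "sets M = sets (restrict_space borel S)"
    "f \<in> borel_measurable (restrict_space borel S)" "\<forall>x\<in>S. \<bar>f x\<bar> \<le> K"
  shows "integrable M (f::_\<Rightarrow>real)"
proof -
  interpret prob_space M by fact
  have sp: "space M = S" using space_rb[OF assms(2)] .
  show ?thesis
    apply (rule integrable_const_bound[where B=K])
    using assms(4) sp apply (auto intro!: AE_I2)[1]
    using assms(3) measurable_cong_sets[OF assms(2) refl] by blast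
qed

lemma int_le_bound:
  assumes "prob_space M" "sets M = sets (restrict_space borel S)"
    "f \<in> borel_measurable (restrict_space borel S)" "\<forall>x\<in>S. \<bar>f x\<bar> \<le> K"
  shows "\<bar>integral\<^sup>L M (f::_\<Rightarrow>real)\<bar> \<le> K"
proof -
  interpret prob_space M by fact
  have sp: "space M = S" using space_rb[OF assms(2)] .
  have "\<bar>integral\<^sup>L M f\<bar> \<le> (\<integral>x. \<bar>f x\<bar> \<partial>M)" by simp
  also have "\<dots> \<le> (\<integral>x. K \<partial>M)"
    apply (rule integral_mono)
    using bint[OF assms] apply (simp add: integrable_abs)
     apply simp
    using assms(4) sp by auto
  also have "\<dots> = K" by (simp add: prob_space)
  finally show ?thesis .
qed



lemma L1:
  fixes Q :: "'a::topological_space measure" and c :: "'j \<Rightarrow> real" and f :: "'a \<Rightarrow> real"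
  assumes PQ: "prob_space Q" "sets Q = sets (restrict_space borel S)"
    and PJ: "\<And>j. j \<in> J \<Longrightarrow> prob_space (Qs j) \<and> sets (Qs j) = sets (restrict_space borel S)"
    and eq: "\<And>E. E \<in> sets (restrict_space borel S) \<Longrightarrow> measure Q E = (\<Sum>j\<in>J. c j * measure (Qs j) E)"
    and f: "f \<in> borel_measurable (restrict_space borel S)" "\<forall>x\<in>S. \<bar>f x\<bar> \<le> K"
  shows "integral\<^sup>L Q f = (\<Sum>j\<in>J. c j * integral\<^sup>L (Qs j) f)"
proof -
  let ?R = "restrict_space borel S"
  have spQ: "space Q = S" using space_rb[OF PQ(2)] .
  have spJ: "\<And>j. j \<in> J \<Longrightarrow> space (Qs j) = S" using space_rb PJ by blast
  have intQ: "\<And>(u::_\<Rightarrow>real) K. u \<in> borel_measurable ?R \<Longrightarrow> \<forall>x\<in>S. \<bar>u x\<bar> \<le> K \<Longrightarrow> integrable Q u"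
    using bint[OF PQ] by blast
  have intJ: "\<And>j (u::_\<Rightarrow>real) K. j \<in> J \<Longrightarrow> u \<in> borel_measurable ?R \<Longrightarrow> \<forall>x\<in>S. \<bar>u x\<bar> \<le> K \<Longrightarrow> integrable (Qs j) u"
    using bint PJ by blast
  have nn: "(\<exists>K. \<forall>x\<in>S. u x \<le> K) \<longrightarrow> integral\<^sup>L Q u = (\<Sum>j\<in>J. c j * integral\<^sup>L (Qs j) u)"
    if u: "u \<in> borel_measurable ?R" "\<And>x. 0 \<le> u x" for u
    using u
  proof (induct rule: borel_measurable_induct_real)
    case (set A)
    have AS: "A \<subseteq> S" using set sets.sets_into_space[OF set] by (simp add: space_restrict_space)
    have "integral\<^sup>L Q (indicator A) = measure Q A" using spQ AS by (simp add: Int_absorb2)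
    moreover have "\<And>j. j \<in> J \<Longrightarrow> integral\<^sup>L (Qs j) (indicator A) = measure (Qs j) A"
      using spJ AS by (simp add: Int_absorb2)
    ultimately show ?case using eq[OF set] by simp
  next
    case (mult u c')
    show ?case
    proof
      assume "\<exists>K. \<forall>x\<in>S. c' * u x \<le> K"
      then obtain K where K: "\<forall>x\<in>S. c' * u x \<le> K" by blast
      show "integral\<^sup>L Q (\<lambda>x. c' * u x) = (\<Sum>j\<in>J. c j * integral\<^sup>L (Qs j) (\<lambda>x. c' * u x))"
      proof (cases "c' = 0")
        case True then show ?thesis by simp
      next
        case False
        then have "c' > 0" using mult by simp
        then have "\<forall>x\<in>S. u x \<le> K / c'" using K by (simp add: field_simps mult.commute)
        then have "integral\<^sup>L Q u = (\<Sum>j\<in>J. c j * integral\<^sup>L (Qs j) u)" using mult by blast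
        then show ?thesis by (simp add: sum_distrib_left algebra_simps)
      qed
    qed
  next
    case (add u v)
    show ?case
    proof
      assume "\<exists>K. \<forall>x\<in>S. v x + u x \<le> K"
      then obtain K where K: "\<forall>x\<in>S. v x + u x \<le> K" by blast
      have bu: "\<forall>x\<in>S. \<bar>u x\<bar> \<le> K" and bv: "\<forall>x\<in>S. \<bar>v x\<bar> \<le> K"
        using K add(2) add(5) by (smt (verit))+
      have IHu: "integral\<^sup>L Q u = (\<Sum>j\<in>J. c j * integral\<^sup>L (Qs j) u)"
        using add(3) bu by (metis abs_le_D1)
      have IHv: "integral\<^sup>L Q v = (\<Sum>j\<in>J. c j * integral\<^sup>L (Qs j) v)"
        using add(7) bv by (metis abs_le_D1)
      have "integral\<^sup>L Q (\<lambda>x. v x + u x) = integral\<^sup>L Q v + integral\<^sup>L Q u"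
        using intQ[OF add(4) bv] intQ[OF add(1) bu] by simp
      moreover have "\<And>j. j \<in> J \<Longrightarrow> integral\<^sup>L (Qs j) (\<lambda>x. v x + u x) = integral\<^sup>L (Qs j) v + integral\<^sup>L (Qs j) u"
        using intJ[OF _ add(4) bv] intJ[OF _ add(1) bu] by simp
      ultimately show "integral\<^sup>L Q (\<lambda>x. v x + u x) = (\<Sum>j\<in>J. c j * integral\<^sup>L (Qs j) (\<lambda>x. v x + u x))"
        using IHu IHv by (simp add: sum.distrib distrib_left)
    qed
  next
    case (seq U)
    show ?case
    proof
      assume "\<exists>K. \<forall>x\<in>S. u x \<le> K"
      then obtain K where K: "\<forall>x\<in>S. u x \<le> K" by blast
      have le: "U i x \<le> u x" if "x \<in> S" for i x
      proof (rule incseq_le)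
        show "incseq (\<lambda>i. U i x)" using seq(4) by (simp add: incseq_def le_fun_def)
        show "(\<lambda>i. U i x) \<longlonglongrightarrow> u x" using seq(5) that by (simp add: space_restrict_space)
      qed
      have bU: "\<forall>x\<in>S. \<bar>U i x\<bar> \<le> K" for i using le K seq(2) by (smt (verit))
      have IH: "integral\<^sup>L Q (U i) = (\<Sum>j\<in>J. c j * integral\<^sup>L (Qs j) (U i))" for i
        using seq(3) bU by (metis abs_le_D1)
      have conv: "(\<lambda>i. integral\<^sup>L M (U i)) \<longlonglongrightarrow> integral\<^sup>L M u"
        if M: "prob_space M" "sets M = sets ?R" for M
      proof -
        interpret prob_space M by fact
        have sp: "space M = S" using space_rb[OF M(2)] .
        have mc: "\<And>g. g \<in> borel_measurable ?R \<Longrightarrow> g \<in> borel_measurable M"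
          using measurable_cong_sets[OF M(2) refl] by blast
        show ?thesis
        proof (rule integral_dominated_convergence[where w="\<lambda>_. K"])
          show "u \<in> borel_measurable M" using mc u by blast
          show "U i \<in> borel_measurable M" for i using mc seq(1) by blast
          show "integrable M (\<lambda>_. K)" by simp
          show "AE x in M. (\<lambda>i. U i x) \<longlonglongrightarrow> u x"
            using seq(5) sp by (auto intro!: AE_I2 simp: space_restrict_space)
          show "AE x in M. norm (U i x) \<le> K" for i using bU sp by (auto intro!: AE_I2)
        qed
      qed
      have c1: "(\<lambda>i. integral\<^sup>L Q (U i)) \<longlonglongrightarrow> integral\<^sup>L Q u" using conv PQ by blast
      have c2: "(\<lambda>i. (\<Sum>j\<in>J. c j * integral\<^sup>L (Qs j) (U i))) \<longlonglongrightarrow> (\<Sum>j\<in>J. c j * integral\<^sup>L (Qs j) u)"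
        by (intro tendsto_sum tendsto_mult_left) (use conv PJ in blast)
      show "integral\<^sup>L Q u = (\<Sum>j\<in>J. c j * integral\<^sup>L (Qs j) u)"
        using c1 c2 IH LIMSEQ_unique by simp
    qed
  qed
  define fp where "fp x = max (f x) 0" for x
  define fm where "fm x = max (- f x) 0" for x
  have fpm: "fp \<in> borel_measurable ?R" "fm \<in> borel_measurable ?R" using f(1) unfolding fp_def fm_def by measurable
  have bp: "\<forall>x\<in>S. \<bar>fp x\<bar> \<le> K" "\<forall>x\<in>S. \<bar>fm x\<bar> \<le> K" using f(2) by (auto simp: fp_def fm_def)
  have ep: "integral\<^sup>L Q fp = (\<Sum>j\<in>J. c j * integral\<^sup>L (Qs j) fp)"
    using nn[OF fpm(1)] bp(1) by (force simp: fp_def)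
  have em: "integral\<^sup>L Q fm = (\<Sum>j\<in>J. c j * integral\<^sup>L (Qs j) fm)"
    using nn[OF fpm(2)] bp(2) by (force simp: fm_def)
  have fe: "f = (\<lambda>x. fp x - fm x)" by (auto simp: fp_def fm_def fun_eq_iff)
  have "integral\<^sup>L Q (\<lambda>x. fp x - fm x) = integral\<^sup>L Q fp - integral\<^sup>L Q fm"
    using intQ[OF fpm(1) bp(1)] intQ[OF fpm(2) bp(2)] by simp
  moreover have "\<And>j. j \<in> J \<Longrightarrow> integral\<^sup>L (Qs j) (\<lambda>x. fp x - fm x) = integral\<^sup>L (Qs j) fp - integral\<^sup>L (Qs j) fm"
    using intJ[OF _ fpm(1) bp(1)] intJ[OF _ fpm(2) bp(2)] by simp
  ultimately show ?thesis using ep em fe by (simp add: sum_subtractf right_diff_distrib)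
qed



lemma pfm: "prob_space M \<Longrightarrow> finite_measure M"
  unfolding prob_space_def by simp

lemma sets_rb_closed:
  assumes "closed (S::'a::topological_space set)"
  shows "sets (restrict_space borel S) = sigma_sets S ((\<inter>) S ` Collect closed)"
proof -
  have sb: "sets borel = sigma_sets (UNIV::'a set) (Collect closed)"
    by (metis borel_eq_closed sets_measure_of top_greatest Pow_UNIV)
  have "S \<in> sigma_sets UNIV (Collect closed)" using assms by auto
  then show ?thesis unfolding sets_restrict_space sb
    by (rule sigma_sets_Int) simp
qed

lemma L2:
  fixes Q :: "'a::metric_space measure" and c :: "'j \<Rightarrow> real"
  assumes PQ: "prob_space Q" "sets Q = sets (restrict_space borel S)"
    and PJ: "\<And>j. j \<in> J \<Longrightarrow> prob_space (Qs j) \<and> sets (Qs j) = sets (restrict_space borel S)"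
    and cS: "closed S"
    and int: "\<And>f. continuous_on S f \<Longrightarrow> bounded (f ` S) \<Longrightarrow>
       integral\<^sup>L Q f = (\<Sum>j\<in>J. c j * integral\<^sup>L (Qs j) f)"
    and E: "E \<in> sets (restrict_space borel S)"
  shows "measure Q E = (\<Sum>j\<in>J. c j * measure (Qs j) E)"
proof -
  let ?R = "restrict_space borel S"
  have clo: "measure Q (S \<inter> F) = (\<Sum>j\<in>J. c j * measure (Qs j) (S \<inter> F))" if F: "closed F" for F
  proof (cases "F = {}")
    case True then show ?thesis by simp
  next
    case False
    define g where "g n x = max 0 (1 - real n * infdist x F)" for n :: nat and x
    have cont: "continuous_on S (g n)" for n unfolding g_def by (intro continuous_intros)
    have b1: "norm (g n x) \<le> 1" for n x unfolding g_def using infdist_nonneg[of x F] by auto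
    have bd: "bounded (g n ` S)" for n by (rule boundedI) (use b1 in auto)
    have lim: "(\<lambda>n. g n x) \<longlonglongrightarrow> indicator F x" for x
    proof (cases "x \<in> F")
      case True then show ?thesis by (simp add: g_def infdist_zero)
    next
      case xF: False
      have d: "infdist x F > 0" using in_closed_iff_infdist_zero[OF F False] xF infdist_nonneg[of x F] by auto
      obtain N :: nat where N: "1 / infdist x F < N" using reals_Archimedean2 by blast
      have "eventually (\<lambda>n. g n x = 0) sequentially"
        unfolding eventually_sequentially
      proof (intro exI allI impI)
        fix n assume "N \<le> n"
        then have "1 / infdist x F < real n" using N by linarith
        then have "1 < real n * infdist x F" using d by (simp add: field_simps)
        then show "g n x = 0" by (simp add: g_def)
      qed
      then have "(\<lambda>n. g n x) \<longlonglongrightarrow> 0" by (simp add: tendsto_eventually)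
      then show ?thesis using xF by simp
    qed
    have Fb: "F \<in> sets borel" using F by auto
    have conv: "(\<lambda>n. integral\<^sup>L M (g n)) \<longlonglongrightarrow> measure M (S \<inter> F)"
      if M: "prob_space M" "sets M = sets ?R" for M
    proof -
      interpret prob_space M by fact
      have sp: "space M = S" using space_rb[OF M(2)] .
      have mc: "\<And>g. g \<in> borel_measurable ?R \<Longrightarrow> g \<in> borel_measurable M"
        using measurable_cong_sets[OF M(2) refl] by blast
      have "(\<lambda>n. integral\<^sup>L M (g n)) \<longlonglongrightarrow> integral\<^sup>L M (indicator F)"
      proof (rule integral_dominated_convergence[where w="\<lambda>_. 1"])
        show "(indicator F :: _ \<Rightarrow> real) \<in> borel_measurable M"
          by (rule mc, rule measurable_restrict_space1) (use Fb in simp)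
        show "g i \<in> borel_measurable M" for i
          using mc borel_measurable_continuous_on_restrict[OF cont] by blast
        show "integrable M (\<lambda>_. 1::real)" by simp
        show "AE x in M. (\<lambda>i. g i x) \<longlonglongrightarrow> indicator F x" using lim by simp
        show "AE x in M. norm (g i x) \<le> 1" for i using b1 by simp
      qed
      then show ?thesis using sp by (simp add: Int_commute)
    qed
    have c1: "(\<lambda>n. integral\<^sup>L Q (g n)) \<longlonglongrightarrow> measure Q (S \<inter> F)" using conv PQ by blast
    have c2: "(\<lambda>n. (\<Sum>j\<in>J. c j * integral\<^sup>L (Qs j) (g n))) \<longlonglongrightarrow> (\<Sum>j\<in>J. c j * measure (Qs j) (S \<inter> F))"
      by (intro tendsto_sum tendsto_mult_left) (use conv PJ in blast)
    have "(\<lambda>n. integral\<^sup>L Q (g n)) = (\<lambda>n. (\<Sum>j\<in>J. c j * integral\<^sup>L (Qs j) (g n)))"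
      using int[OF cont bd] by blast
    then show ?thesis using c1 c2 LIMSEQ_unique by metis
  qed
  have one: "1 = (\<Sum>j\<in>J. c j)"
  proof -
    have "measure Q S = (\<Sum>j\<in>J. c j * measure (Qs j) S)" using clo[of UNIV] by simp
    moreover have "measure Q S = 1" using prob_space.prob_space[OF PQ(1)] space_rb[OF PQ(2)] by simp
    moreover have "\<And>j. j \<in> J \<Longrightarrow> measure (Qs j) S = 1"
      using prob_space.prob_space PJ space_rb by metis
    ultimately show ?thesis by simp
  qed
  have sQ: "space Q = S" using space_rb[OF PQ(2)] .
  have sJ: "\<And>j. j \<in> J \<Longrightarrow> space (Qs j) = S" using space_rb PJ by blast
  have ist: "Int_stable ((\<inter>) S ` Collect closed)" unfolding Int_stable_def
  proof safe
    fix F1 F2 :: "'a set" assume "closed F1" "closed F2"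
    then show "S \<inter> F1 \<inter> (S \<inter> F2) \<in> (\<inter>) S ` Collect closed"
      by (intro image_eqI[where x="F1 \<inter> F2"]) auto
  qed
  have sub: "(\<inter>) S ` Collect closed \<subseteq> Pow S" by auto
  have "E \<in> sigma_sets S ((\<inter>) S ` Collect closed)" using E sets_rb_closed[OF cS] by simp
  from ist sub this show ?thesis
  proof (induct rule: sigma_sets_induct_disjoint)
    case (basic A) then show ?case using clo by auto
  next
    case empty show ?case by simp
  next
    case (compl A)
    have As: "A \<in> sets ?R" using compl(1) sets_rb_closed[OF cS] by simp
    have "measure Q (S - A) = 1 - measure Q A"
      using finite_measure.finite_measure_compl[of Q A] PQ As sQ prob_space.prob_space[OF PQ(1)]
      by (simp add: pfm)
    moreover have "\<And>j. j \<in> J \<Longrightarrow> measure (Qs j) (S - A) = 1 - measure (Qs j) A"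
    proof -
      fix j assume j: "j \<in> J"
      show "measure (Qs j) (S - A) = 1 - measure (Qs j) A"
      using finite_measure.finite_measure_compl[of "Qs j" A] PJ[OF j] As sJ[OF j]
        prob_space.prob_space[of "Qs j"] by (simp add: pfm)
    qed
    ultimately show ?case using compl(2) one
      by (simp add: right_diff_distrib sum_subtractf)
  next
    case (union A)
    have As: "range A \<subseteq> sets ?R" using union(2) sets_rb_closed[OF cS] by simp
    have "(\<lambda>i. measure Q (A i)) sums measure Q (\<Union>i. A i)"
      using finite_measure.finite_measure_UNION[of Q A] PQ As union(1)
      by (simp add: pfm)
    moreover have "(\<lambda>i. measure Q (A i)) sums (\<Sum>j\<in>J. c j * measure (Qs j) (\<Union>i. A i))"
    proof -
      have "(\<lambda>n. \<Sum>j\<in>J. c j * measure (Qs j) (A n)) sums (\<Sum>j\<in>J. c j * measure (Qs j) (\<Union>i. A i))"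
      proof (rule sums_sum)
        fix j assume j: "j \<in> J"
        have "(\<lambda>i. measure (Qs j) (A i)) sums measure (Qs j) (\<Union>i. A i)"
          using finite_measure.finite_measure_UNION[of "Qs j" A] PJ[OF j] As union(1)
          by (simp add: pfm)
        then show "(\<lambda>n. c j * measure (Qs j) (A n)) sums (c j * measure (Qs j) (\<Union>i. A i))"
          by (rule sums_mult)
      qed
      then show ?thesis using union(3) by simp
    qed
    ultimately show ?case using sums_unique2 by blast
  qed
qed



lemma lin_inner:
  fixes g :: "real^'d \<Rightarrow> real"
  assumes "linear g"
  shows "g y = y \<bullet> (\<chi> i. g (axis i 1))"
proof -
  have "y = (\<Sum>i\<in>UNIV. y $ i *\<^sub>R axis i 1)"
    using basis_expansion[of y] by (simp add: scalar_mult_eq_scaleR)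
  then have "g y = g (\<Sum>i\<in>UNIV. y $ i *\<^sub>R axis i 1)" by simp
  also have "\<dots> = (\<Sum>i\<in>UNIV. y $ i * g (axis i 1))"
    using assms by (simp add: linear_sum linear_scale)
  also have "\<dots> = y \<bullet> (\<chi> i. g (axis i 1))" by (simp add: inner_vec_def)
  finally show ?thesis .
qed

lemma LA:
  fixes V :: "(real^'d) set"
  obtains B :: "(real^'d) set" and b :: "real^'d \<Rightarrow> real^'d"
  where "finite B" "B \<subseteq> V" "\<And>y. y \<in> V \<Longrightarrow> y = (\<Sum>v\<in>B. (y \<bullet> b v) *\<^sub>R v)"
proof -
  obtain B where B: "B \<subseteq> V" "independent B" "V \<subseteq> span B"
    by (meson maximal_independent_subset)
  have fB: "finite B" using B(2) by (rule finiteI_independent)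
  define l where "l w = (SOME g::real^'d\<Rightarrow>real. linear g \<and> (\<forall>x\<in>B. g x = (if x = w then 1 else 0)))" for w
  have l: "linear (l w) \<and> (\<forall>x\<in>B. l w x = (if x = w then 1 else 0))" for w
  proof -
    have "\<exists>g::real^'d\<Rightarrow>real. linear g \<and> (\<forall>x\<in>B. g x = (if x = w then 1 else 0))"
      by (rule linear_independent_extend[OF B(2)])
    then show ?thesis unfolding l_def by (rule someI_ex)
  qed
  define b where "b w = (\<chi> i. l w (axis i 1))" for w
  have lb: "l w y = y \<bullet> b w" for w y unfolding b_def using l lin_inner by blast
  show ?thesis
  proof (rule that[OF fB B(1)])
    fix y assume "y \<in> V"
    then have "y \<in> span B" using B(3) by blast
    then obtain u where u: "y = (\<Sum>v\<in>B. u v *\<^sub>R v)" using span_finite[OF fB] by blast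
    have co: "l w y = u w" if w: "w \<in> B" for w
    proof -
      have "l w y = (\<Sum>v\<in>B. u v * l w v)" using l[of w] u by (simp add: linear_sum linear_scale)
      also have "\<dots> = (\<Sum>v\<in>B. if v = w then u v else 0)" using l[of w] by (intro sum.cong) auto
      also have "\<dots> = u w" using fB w by simp
      finally show ?thesis .
    qed
    have "y = (\<Sum>v\<in>B. l v y *\<^sub>R v)" using u co by (metis (no_types, lifting) sum.cong)
    then show "y = (\<Sum>v\<in>B. (y \<bullet> b v) *\<^sub>R v)" using lb by simp
  qed
qed



lemma supn:
  assumes "bcontinuous S f" "s \<in> S"
  shows "\<bar>f s\<bar> \<le> sup_norm S f"
proof -
  obtain a where a: "\<forall>x\<in>f ` S. \<bar>x\<bar> \<le> a" using assms(1) unfolding bcontinuous_def bounded_real by blast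
  have "bdd_above ((\<lambda>s. \<bar>f s\<bar>) ` S)" using a by (auto intro!: bdd_aboveI2[where M=a])
  then show ?thesis unfolding sup_norm_def using assms(2) by (rule cSUP_upper[rotated])
qed

lemma bc_meas: "bcontinuous S f \<Longrightarrow> f \<in> borel_measurable (restrict_space borel S)"
  unfolding bcontinuous_def by (simp add: borel_measurable_continuous_on_restrict)

lemma bc_bound: "bcontinuous S f \<Longrightarrow> \<forall>x\<in>S. \<bar>f x\<bar> \<le> sup_norm S f"
  using supn by blast

theorem theorem2:
  fixes S :: "'a::euclidean_space set" and A :: "'b::euclidean_space set"
    and H :: nat and P :: "nat \<Rightarrow> 'a \<Rightarrow> 'b \<Rightarrow> 'a measure"
    and r :: "nat \<Rightarrow> 'a \<Rightarrow> 'b \<Rightarrow> real" and mu :: "'a measure"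
    and \<phi> :: "'a \<Rightarrow> 'b \<Rightarrow> real ^ 'd" and h :: nat
  assumes "finite_horizon_mdp S A H P r mu"
    and "compact (S \<times> A)"
    and "h \<in> {1..H}"
  shows "(\<exists>(\<nu>::'d \<Rightarrow> 'a set \<Rightarrow> real) (\<theta>::real ^ 'd).
            (\<forall>i. finite_signed_measure (restrict_space borel S) (\<nu> i)) \<and>
            (\<forall>s\<in>S. \<forall>a\<in>A.
               (\<forall>B\<in>sets (restrict_space borel S).
                  measure (P h s a) B = (\<Sum>i\<in>UNIV. \<phi> s a $ i * \<nu> i B)) \<and>
               r h s a = \<phi> s a \<bullet> \<theta>))
         \<longleftrightarrow>
         (\<exists>C>0. \<forall>f. bcontinuous S f \<longrightarrow>
            (\<exists>\<omega>::real ^ 'd.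
               (\<forall>s\<in>S. \<forall>a\<in>A. r h s a + (\<integral>s'. f s' \<partial>(P h s a)) = \<phi> s a \<bullet> \<omega>) \<and>
               norm \<omega> \<le> C * (sup_norm S f + 1)))"
proof -
  let ?R = "restrict_space borel S"
  have PP: "\<And>s a. s \<in> S \<Longrightarrow> a \<in> A \<Longrightarrow> prob_space (P h s a) \<and> sets (P h s a) = sets ?R"
    using assms(1,3) unfolding finite_horizon_mdp_def by blast
  have rb: "\<And>s a. s \<in> S \<Longrightarrow> a \<in> A \<Longrightarrow> 0 \<le> r h s a \<and> r h s a \<le> 1"
    using assms(1,3) unfolding finite_horizon_mdp_def by blast
  have Sne: "S \<noteq> {}"
  proof -
    have "prob_space mu" "sets mu = sets ?R" using assms(1) unfolding finite_horizon_mdp_def by auto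
    then show ?thesis using space_rb prob_space.not_empty by metis
  qed
  have cS: "closed S" if "A \<noteq> {}"
  proof -
    have "compact (fst ` (S \<times> A))" by (rule compact_continuous_image) (auto intro: continuous_intros assms(2))
    then show ?thesis using that by (simp add: compact_imp_closed)
  qed
  define V where "V = (\<lambda>(s, a). \<phi> s a) ` (S \<times> A)"
  obtain B b where fB: "finite B" and BV: "B \<subseteq> V" and exp0: "\<And>y. y \<in> V \<Longrightarrow> y = (\<Sum>v\<in>B. (y \<bullet> b v) *\<^sub>R v)"
    using LA by blast
  have ex: "\<exists>s a. s \<in> S \<and> a \<in> A \<and> \<phi> s a = v" if "v \<in> B" for v using BV that unfolding V_def by fastforce
  define ps where "ps v = (SOME s. \<exists>a. s \<in> S \<and> a \<in> A \<and> \<phi> s a = v)" for v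
  define pa where "pa v = (SOME a. ps v \<in> S \<and> a \<in> A \<and> \<phi> (ps v) a = v)" for v
  have pt: "ps v \<in> S \<and> pa v \<in> A \<and> \<phi> (ps v) (pa v) = v" if "v \<in> B" for v
  proof -
    have "\<exists>a. ps v \<in> S \<and> a \<in> A \<and> \<phi> (ps v) a = v" unfolding ps_def by (rule someI_ex) (rule ex[OF that])
    then show ?thesis unfolding pa_def by (rule someI_ex)
  qed
  define Q where "Q v = P h (ps v) (pa v)" for v
  define rv where "rv v = r h (ps v) (pa v)" for v
  have PQ: "prob_space (Q v) \<and> sets (Q v) = sets ?R" if "v \<in> B" for v
    unfolding Q_def using PP pt[OF that] by blast
  have exp: "\<phi> s a \<bullet> w = (\<Sum>v\<in>B. (\<phi> s a \<bullet> b v) * (v \<bullet> w))" if "s \<in> S" "a \<in> A" for s a w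
  proof -
    have "\<phi> s a = (\<Sum>v\<in>B. (\<phi> s a \<bullet> b v) *\<^sub>R v)" using exp0 that by (auto simp: V_def)
    then have "\<phi> s a \<bullet> w = (\<Sum>v\<in>B. (\<phi> s a \<bullet> b v) *\<^sub>R v) \<bullet> w" by simp
    then show ?thesis by (simp add: inner_sum_left)
  qed
  show ?thesis
  proof
    assume "\<exists>(\<nu>::'d \<Rightarrow> 'a set \<Rightarrow> real) (\<theta>::real ^ 'd).
            (\<forall>i. finite_signed_measure (restrict_space borel S) (\<nu> i)) \<and>
            (\<forall>s\<in>S. \<forall>a\<in>A.
               (\<forall>B\<in>sets (restrict_space borel S).
                  measure (P h s a) B = (\<Sum>i\<in>UNIV. \<phi> s a $ i * \<nu> i B)) \<and>
               r h s a = \<phi> s a \<bullet> \<theta>)"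
    then obtain \<nu> :: "'d \<Rightarrow> 'a set \<Rightarrow> real" and \<theta> where
      H1: "\<And>s a E. s \<in> S \<Longrightarrow> a \<in> A \<Longrightarrow> E \<in> sets ?R \<Longrightarrow> measure (P h s a) E = (\<Sum>i\<in>UNIV. \<phi> s a $ i * \<nu> i E)"
      and H2: "\<And>s a. s \<in> S \<Longrightarrow> a \<in> A \<Longrightarrow> r h s a = \<phi> s a \<bullet> \<theta>"
      by blast
    define C where "C = 1 + (\<Sum>v\<in>B. norm (b v))"
    have Cpos: "C > 0" unfolding C_def by (smt (verit) sum_nonneg norm_ge_zero)
    show "\<exists>C>0. \<forall>f. bcontinuous S f \<longrightarrow>
            (\<exists>\<omega>::real ^ 'd.
               (\<forall>s\<in>S. \<forall>a\<in>A. r h s a + (\<integral>s'. f s' \<partial>(P h s a)) = \<phi> s a \<bullet> \<omega>) \<and>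
               norm \<omega> \<le> C * (sup_norm S f + 1))"
    proof (intro exI conjI allI impI)
      show "C > 0" by fact
      fix f assume f: "bcontinuous S f"
      define \<omega> where "\<omega> = (\<Sum>v\<in>B. (rv v + integral\<^sup>L (Q v) f) *\<^sub>R b v)"
      have sn0: "0 \<le> sup_norm S f" using Sne supn[OF f] by force
      show "\<forall>s\<in>S. \<forall>a\<in>A. r h s a + (\<integral>s'. f s' \<partial>(P h s a)) = \<phi> s a \<bullet> \<omega>"
      proof (intro ballI)
        fix s a assume sa: "s \<in> S" "a \<in> A"
        have meq: "measure (P h s a) E = (\<Sum>v\<in>B. (\<phi> s a \<bullet> b v) * measure (Q v) E)" if E: "E \<in> sets ?R" for E
        proof -
          have "measure (P h s a) E = \<phi> s a \<bullet> (\<chi> i. \<nu> i E)" using H1[OF sa E] by (simp add: inner_vec_def)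
          also have "\<dots> = (\<Sum>v\<in>B. (\<phi> s a \<bullet> b v) * (v \<bullet> (\<chi> i. \<nu> i E)))" by (rule exp[OF sa])
          also have "\<dots> = (\<Sum>v\<in>B. (\<phi> s a \<bullet> b v) * measure (Q v) E)"
          proof (rule sum.cong[OF refl])
            fix v assume v: "v \<in> B"
            have "measure (Q v) E = \<phi> (ps v) (pa v) \<bullet> (\<chi> i. \<nu> i E)"
              unfolding Q_def using H1[of "ps v" "pa v" E] pt[OF v] E by (simp add: inner_vec_def)
            then show "(\<phi> s a \<bullet> b v) * (v \<bullet> (\<chi> i. \<nu> i E)) = (\<phi> s a \<bullet> b v) * measure (Q v) E"
              using pt[OF v] by simp
          qed
          finally show ?thesis .
        qed
        have req: "r h s a = (\<Sum>v\<in>B. (\<phi> s a \<bullet> b v) * rv v)"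
        proof -
          have "r h s a = (\<Sum>v\<in>B. (\<phi> s a \<bullet> b v) * (v \<bullet> \<theta>))" using H2[OF sa] exp[OF sa, of \<theta>] by (rule trans)
          also have "\<dots> = (\<Sum>v\<in>B. (\<phi> s a \<bullet> b v) * rv v)"
            by (rule sum.cong[OF refl]) (use pt H2 in \<open>auto simp: rv_def\<close>)
          finally show ?thesis .
        qed
        have ieq: "integral\<^sup>L (P h s a) f = (\<Sum>v\<in>B. (\<phi> s a \<bullet> b v) * integral\<^sup>L (Q v) f)"
          by (rule L1[OF _ _ PQ meq bc_meas[OF f] bc_bound[OF f]]) (use PP sa in blast)+
        have "\<phi> s a \<bullet> \<omega> = (\<Sum>v\<in>B. (rv v + integral\<^sup>L (Q v) f) * (\<phi> s a \<bullet> b v))"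
          unfolding \<omega>_def by (simp add: inner_sum_right)
        also have "\<dots> = r h s a + integral\<^sup>L (P h s a) f"
          unfolding req ieq by (simp add: sum.distrib algebra_simps)
        finally show "r h s a + (\<integral>s'. f s' \<partial>(P h s a)) = \<phi> s a \<bullet> \<omega>" by simp
      qed
      have "norm \<omega> \<le> (\<Sum>v\<in>B. norm ((rv v + integral\<^sup>L (Q v) f) *\<^sub>R b v))"
        unfolding \<omega>_def by (rule norm_sum)
      also have "\<dots> \<le> (\<Sum>v\<in>B. (1 + sup_norm S f) * norm (b v))"
      proof (rule sum_mono)
        fix v assume v: "v \<in> B"
        have "\<bar>rv v\<bar> \<le> 1" using rb pt[OF v] unfolding rv_def by (smt (verit))
        moreover have "\<bar>integral\<^sup>L (Q v) f\<bar> \<le> sup_norm S f"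
          using int_le_bound[OF _ _ bc_meas[OF f] bc_bound[OF f]] PQ[OF v] by blast
        ultimately have "\<bar>rv v + integral\<^sup>L (Q v) f\<bar> \<le> 1 + sup_norm S f" by linarith
        then show "norm ((rv v + integral\<^sup>L (Q v) f) *\<^sub>R b v) \<le> (1 + sup_norm S f) * norm (b v)"
          by (simp add: mult_right_mono)
      qed
      also have "\<dots> = (1 + sup_norm S f) * (\<Sum>v\<in>B. norm (b v))" by (simp add: sum_distrib_left)
      also have "\<dots> \<le> C * (sup_norm S f + 1)"
        unfolding C_def using sn0 by (simp add: algebra_simps)
      finally show "norm \<omega> \<le> C * (sup_norm S f + 1)" .
    qed
  next
    assume "\<exists>C>0. \<forall>f. bcontinuous S f \<longrightarrow>
            (\<exists>\<omega>::real ^ 'd.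
               (\<forall>s\<in>S. \<forall>a\<in>A. r h s a + (\<integral>s'. f s' \<partial>(P h s a)) = \<phi> s a \<bullet> \<omega>) \<and>
               norm \<omega> \<le> C * (sup_norm S f + 1))"
    then have Hw: "\<And>f. bcontinuous S f \<Longrightarrow> \<exists>\<omega>::real ^ 'd.
               (\<forall>s\<in>S. \<forall>a\<in>A. r h s a + (\<integral>s'. f s' \<partial>(P h s a)) = \<phi> s a \<bullet> \<omega>)" by blast
    define \<nu> where "\<nu> i E = (\<Sum>v\<in>B. b v $ i * measure (Q v) E)" for i E
    define \<theta> where "\<theta> = (\<Sum>v\<in>B. rv v *\<^sub>R b v)"
    have key: "r h s a + integral\<^sup>L (P h s a) f = (\<Sum>v\<in>B. (\<phi> s a \<bullet> b v) * (rv v + integral\<^sup>L (Q v) f))"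
      if sa: "s \<in> S" "a \<in> A" and f: "bcontinuous S f" for s a f
    proof -
      obtain \<omega> where w: "\<forall>s\<in>S. \<forall>a\<in>A. r h s a + (\<integral>s'. f s' \<partial>(P h s a)) = \<phi> s a \<bullet> \<omega>"
        using Hw[OF f] by blast
      have "r h s a + integral\<^sup>L (P h s a) f = (\<Sum>v\<in>B. (\<phi> s a \<bullet> b v) * (v \<bullet> \<omega>))"
        using w sa exp[OF sa, of \<omega>] by simp
      also have "\<dots> = (\<Sum>v\<in>B. (\<phi> s a \<bullet> b v) * (rv v + integral\<^sup>L (Q v) f))"
        by (rule sum.cong[OF refl]) (use pt w in \<open>force simp: rv_def Q_def\<close>)
      finally show ?thesis .
    qed
    have bc0: "bcontinuous S (\<lambda>_. 0)" unfolding bcontinuous_def bounded_real by (auto intro: continuous_intros)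
    show "\<exists>(\<nu>::'d \<Rightarrow> 'a set \<Rightarrow> real) (\<theta>::real ^ 'd).
            (\<forall>i. finite_signed_measure (restrict_space borel S) (\<nu> i)) \<and>
            (\<forall>s\<in>S. \<forall>a\<in>A.
               (\<forall>B\<in>sets (restrict_space borel S).
                  measure (P h s a) B = (\<Sum>i\<in>UNIV. \<phi> s a $ i * \<nu> i B)) \<and>
               r h s a = \<phi> s a \<bullet> \<theta>)"
    proof (intro exI conjI allI ballI)
      fix i
      show "finite_signed_measure ?R (\<nu> i)"
        unfolding finite_signed_measure_def
      proof (intro conjI allI impI)
        show "\<nu> i {} = 0" by (simp add: \<nu>_def)
        fix F :: "nat \<Rightarrow> 'a set" assume F: "range F \<subseteq> sets ?R" "disjoint_family F"
        show "(\<lambda>n. \<nu> i (F n)) sums \<nu> i (\<Union>n. F n)"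
          unfolding \<nu>_def
        proof (rule sums_sum)
          fix v assume v: "v \<in> B"
          have "(\<lambda>n. measure (Q v) (F n)) sums measure (Q v) (\<Union>n. F n)"
            using finite_measure.finite_measure_UNION[of "Q v" F] PQ[OF v] F
            by (simp add: pfm)
          then show "(\<lambda>n. b v $ i * measure (Q v) (F n)) sums (b v $ i * measure (Q v) (\<Union>n. F n))"
            by (rule sums_mult)
        qed
      qed
    next
      fix s a assume sa: "s \<in> S" "a \<in> A"
      have req: "r h s a = (\<Sum>v\<in>B. (\<phi> s a \<bullet> b v) * rv v)"
        using key[OF sa bc0] by simp
      show "r h s a = \<phi> s a \<bullet> \<theta>"
        unfolding req \<theta>_def by (simp add: inner_sum_right mult.commute)
      fix E assume E: "E \<in> sets ?R"
      have ieq: "integral\<^sup>L (P h s a) f = (\<Sum>v\<in>B. (\<phi> s a \<bullet> b v) * integral\<^sup>L (Q v) f)"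
        if f: "continuous_on S f" "bounded (f ` S)" for f
      proof -
        have "bcontinuous S f" using f by (simp add: bcontinuous_def)
        from key[OF sa this] req show ?thesis by (simp add: sum.distrib distrib_left)
      qed
      have meq: "measure (P h s a) E = (\<Sum>v\<in>B. (\<phi> s a \<bullet> b v) * measure (Q v) E)"
        by (rule L2[OF _ _ PQ cS ieq E]) (use PP sa in blast)+
      show "measure (P h s a) E = (\<Sum>i\<in>UNIV. \<phi> s a $ i * \<nu> i E)"
        unfolding meq \<nu>_def
        by (simp add: sum_distrib_left sum_distrib_right inner_vec_def mult.assoc mult.left_commute
              sum.swap[of _ UNIV B])
    qed
  qed
qed


end
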